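(* Let $(X,D,K)$ be a complete $b$-metric-like space with constant $K\ge1$, and let $\varphi:(0,\infty)\to(K^2,\infty)$ be a function such that for every sequence $\{t_n\}\subset(0,\infty)$, $\varphi(t_n)\to K^2$ from above implies $t_n\to 0$. Assume that $S,T:X\to X$ are onto mappings such that $$D(Tx,Sy)\geq \varphi\big(D(x,y)\big)\,D(x,y)$$ for all $x,y\in X$ with $D(x,y)>0$. Then $T$ and $S$ have a unique common fixed point.
   Context: A $b$-metric-like space $(X,D,K)$ is a set $X$ with a function $D:X\times X\to[0,\infty)$ and a constant $K\ge 1$ such that for all $x,y,z\in X$: (i) $D(x,y)=0\Rightarrow x=y$; (ii) $D(x,y)=D(y,x)$; (iii) $D(x,y)\le K[D(x,z)+D(z,y)]$. (Note $D(x,x)$ need not be $0$.) A sequence $\{x_n\}$ converges to $x$ if $\lim_{n\to\infty}D(x_n,x)=D(x,x)$. A sequence $\{x_n\}$ is Cauchy if $\lim_{n,m\to\infty}D(x_n,x_m)$ exists and is finite. The space is complete if every Cauchy sequence $\{x_n\}$ converges to some $x\in X$ with $\lim_{n,m\to\infty}D(x_n,x_m)=D(x,x)=\lim_{n\to\infty}D(x_n,x)$. *)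

theory Defs
  imports Complex_Main
begin

text \<open>b-metric-like space (X,D,K), X being the whole (nonempty) type 'a.\<close>
definition b_metric_like :: "('a \<Rightarrow> 'a \<Rightarrow> real) \<Rightarrow> real \<Rightarrow> bool" where
  "b_metric_like D K \<longleftrightarrow> K \<ge> 1 \<and> (\<forall>x y. D x y \<ge> 0) \<and> (\<forall>x y. D x y = 0 \<longrightarrow> x = y)
     \<and> (\<forall>x y. D x y = D y x) \<and> (\<forall>x y z. D x y \<le> K * (D x z + D z y))"

definition bml_double_limit :: "('a \<Rightarrow> 'a \<Rightarrow> real) \<Rightarrow> (nat \<Rightarrow> 'a) \<Rightarrow> real \<Rightarrow> bool" where
  "bml_double_limit D xs L \<longleftrightarrow>
     (\<forall>e>0. \<exists>N. \<forall>n m. n \<ge> N \<and> m \<ge> N \<longrightarrow> \<bar>D (xs n) (xs m) - L\<bar> < e)"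

definition bml_converges :: "('a \<Rightarrow> 'a \<Rightarrow> real) \<Rightarrow> (nat \<Rightarrow> 'a) \<Rightarrow> 'a \<Rightarrow> bool" where
  "bml_converges D xs x \<longleftrightarrow> (\<lambda>n. D (xs n) x) \<longlonglongrightarrow> D x x"

definition bml_cauchy :: "('a \<Rightarrow> 'a \<Rightarrow> real) \<Rightarrow> (nat \<Rightarrow> 'a) \<Rightarrow> bool" where
  "bml_cauchy D xs \<longleftrightarrow> (\<exists>L. bml_double_limit D xs L)"

definition bml_complete :: "('a \<Rightarrow> 'a \<Rightarrow> real) \<Rightarrow> bool" where
  "bml_complete D \<longleftrightarrow> (\<forall>xs. bml_cauchy D xs \<longrightarrow>
      (\<exists>x. bml_double_limit D xs (D x x) \<and> bml_converges D xs x))"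

end

theory Submission
  imports Defs
begin

theorem theorem2p4:
  fixes D :: "'a \<Rightarrow> 'a \<Rightarrow> real" and K :: real
    and \<phi> :: "real \<Rightarrow> real" and S T :: "'a \<Rightarrow> 'a"
  assumes bml: "b_metric_like D K"
    and complete: "bml_complete D"
    and phi_range: "\<And>t. t > 0 \<Longrightarrow> \<phi> t > K\<^sup>2"
    and phi_cond: "\<And>tt :: nat \<Rightarrow> real. (\<forall>n. tt n > 0) \<Longrightarrow>
                     (\<lambda>n. \<phi> (tt n)) \<longlonglongrightarrow> K\<^sup>2 \<Longrightarrow> tt \<longlonglongrightarrow> 0"
    and onto_S: "surj S" and onto_T: "surj T"
    and contr: "\<And>x y. D x y > 0 \<Longrightarrow> D (T x) (S y) \<ge> \<phi> (D x y) * D x y"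
  shows "\<exists>!x. T x = x \<and> S x = x"
proof -
  have K1: "K \<ge> 1" and nn: "\<And>x y. D x y \<ge> 0" and z0: "\<And>x y. D x y = 0 \<Longrightarrow> x = y"
    and sym: "\<And>x y. D x y = D y x" and tri: "\<And>x y z. D x y \<le> K * (D x z + D z y)"
    using bml unfolding b_metric_like_def by auto
  have K2: "K\<^sup>2 \<ge> 1" using K1 by (simp add: one_le_power)
  have G: "K\<^sup>2 * D a b \<le> D (T a) (S b)" for a b
  proof (cases "D a b > 0")
    case True
    have "K\<^sup>2 * D a b \<le> \<phi> (D a b) * D a b"
      using phi_range[OF True] True by (simp add: mult_right_mono)
    also have "\<dots> \<le> D (T a) (S b)" using contr[OF True] .
    finally show ?thesis .
  next
    case False
    then have "D a b = 0" using nn[of a b] by linarith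
    then show ?thesis using nn by simp
  qed
  have G': "D a b \<le> D (T a) (S b)" for a b
  proof -
    have "D a b \<le> K\<^sup>2 * D a b" using mult_right_mono[of 1 "K\<^sup>2" "D a b"] K2 nn[of a b] by simp
    then show ?thesis using G[of a b] by linarith
  qed
  have uniq: "u = w" if "T u = u" "S u = u" "T w = w" "S w = w" for u w
  proof (rule ccontr)
    assume "u \<noteq> w"
    then have pos: "D u w > 0" using nn[of u w] z0[of u w] by force
    have "\<phi> (D u w) * D u w \<le> D u w" using contr[OF pos] that by simp
    moreover have "K\<^sup>2 * D u w < \<phi> (D u w) * D u w"
      using phi_range[OF pos] pos by simp
    moreover have "D u w \<le> K\<^sup>2 * D u w" using K2 pos by simp
    ultimately show False by linarith
  qed
  define f where "f (n::nat) y = (if even n then (SOME w. T w = y) else (SOME w. S w = y))" for n y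
  define x where "x = rec_nat undefined f"
  have xS: "x (Suc n) = f n (x n)" for n unfolding x_def by simp
  have xT: "T (x (Suc n)) = x n" if "even n" for n
  proof -
    have "\<exists>w. T w = x n" using onto_T by (metis surjD)
    then show ?thesis using that by (simp add: xS f_def) (rule someI_ex)
  qed
  have xSS: "S (x (Suc n)) = x n" if "odd n" for n
  proof -
    have "\<exists>w. S w = x n" using onto_S by (metis surjD)
    then show ?thesis using that by (simp add: xS f_def) (rule someI_ex)
  qed
  have A: "\<phi> (D (x (Suc i)) (x (Suc j))) * D (x (Suc i)) (x (Suc j)) \<le> D (x i) (x j)"
    if "odd (i + j)" "D (x (Suc i)) (x (Suc j)) > 0" for i j
  proof (cases "even i")
    case True
    then have "odd j" using that by auto
    then show ?thesis using contr[OF that(2)] xT[OF True] xSS[of j] by simp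
  next
    case False
    then have "even j" using that by auto
    have "D (x (Suc j)) (x (Suc i)) > 0" using that sym by simp
    from contr[OF this] xT[OF \<open>even j\<close>] xSS[of i] False
    show ?thesis by (simp add: sym)
  qed
  have A': "K\<^sup>2 * D (x (Suc i)) (x (Suc j)) \<le> D (x i) (x j)" if "odd (i + j)" for i j
  proof (cases "even i")
    case True
    then have "odd j" using that by auto
    then show ?thesis using G[of "x (Suc i)" "x (Suc j)"] xT[OF True] xSS[of j] by simp
  next
    case False
    then have "even j" using that by auto
    from G[of "x (Suc j)" "x (Suc i)"] xT[OF \<open>even j\<close>] xSS[of i] False
    show ?thesis by (simp add: sym)
  qed
  define d where "d n = D (x n) (x (Suc n))" for n
  have dnn: "d n \<ge> 0" for n unfolding d_def using nn .
  have ddec: "d (Suc n) \<le> d n" for n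
  proof -
    have "K\<^sup>2 * d (Suc n) \<le> d n" using A'[of n "Suc n"] unfolding d_def by simp
    moreover have "d (Suc n) \<le> K\<^sup>2 * d (Suc n)" using mult_right_mono[of 1 "K\<^sup>2" "d (Suc n)"] K2 dnn[of "Suc n"] by simp
    ultimately show ?thesis by linarith
  qed
  have d0: "d \<longlonglongrightarrow> 0"
  proof -
    have "decseq d" using ddec by (simp add: decseq_SucI)
    then obtain r where r: "d \<longlonglongrightarrow> r" "\<forall>i. r \<le> d i"
      using decseq_convergent[of d 0] dnn by blast
    have r0: "r \<ge> 0" using LIMSEQ_le_const[OF r(1), of 0] dnn by blast
    have "r = 0"
    proof (rule ccontr)
      assume "r \<noteq> 0"
      then have rp: "r > 0" using r0 by simp
      have dp: "d n > 0" for n using r(2) rp by (meson less_le_trans)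
      have ph: "\<phi> (d (Suc n)) \<le> d n / d (Suc n)" for n
      proof -
        have "\<phi> (d (Suc n)) * d (Suc n) \<le> d n" using A[of n "Suc n"] dp[of "Suc n"]
          unfolding d_def by simp
        then show ?thesis using dp[of "Suc n"] by (simp add: pos_le_divide_eq)
      qed
      have phl: "\<phi> (d (Suc n)) > K\<^sup>2" for n using phi_range[OF dp[of "Suc n"]] .
      have rat: "(\<lambda>n. d n / d (Suc n)) \<longlonglongrightarrow> 1"
      proof -
        have "(\<lambda>n. d n / d (Suc n)) \<longlonglongrightarrow> r / r"
          using tendsto_divide[OF r(1) LIMSEQ_Suc[OF r(1)]] rp by simp
        then show ?thesis using rp by simp
      qed
      have "K\<^sup>2 \<le> 1"
        using LIMSEQ_le_const[OF rat, of "K\<^sup>2"] ph phl by (meson less_le_trans less_imp_le)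
      then have Keq: "K\<^sup>2 = 1" using K2 by simp
      have "(\<lambda>n. \<phi> (d (Suc n))) \<longlonglongrightarrow> K\<^sup>2"
        apply (rule tendsto_sandwich[where f="\<lambda>n. K\<^sup>2" and h="\<lambda>n. d n / d (Suc n)"])
        using ph phl rat Keq by (auto intro!: always_eventually less_imp_le)
      then have "(\<lambda>n. d (Suc n)) \<longlonglongrightarrow> 0" using phi_cond[of "\<lambda>n. d (Suc n)"] dp by blast
      moreover have "(\<lambda>n. d (Suc n)) \<longlonglongrightarrow> r" using LIMSEQ_Suc[OF r(1)] .
      ultimately show False using LIMSEQ_unique rp by force
    qed
    then show ?thesis using r(1) by simp
  qed
  have C: "\<forall>\<epsilon>>0. \<exists>N. \<forall>n m. N \<le> n \<longrightarrow> N \<le> m \<longrightarrow> odd (n+m) \<longrightarrow> D (x n) (x m) < \<epsilon>"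
  proof (rule ccontr)
    assume "\<not> ?thesis"
    then obtain \<epsilon> where ep: "\<epsilon> > 0"
      and H: "\<forall>N. \<exists>n m. N \<le> n \<and> N \<le> m \<and> odd (n+m) \<and> \<epsilon> \<le> D (x n) (x m)"
      by (auto simp: not_less)
    then obtain p q where pq: "\<And>N. N \<le> p N \<and> N \<le> q N \<and> odd (p N + q N) \<and> \<epsilon> \<le> D (x (p N)) (x (q N))"
      by metis
    define a where "a N = D (x (p N)) (x (q N))" for N
    define t where "t N = D (x (Suc (p N))) (x (Suc (q N)))" for N
    define e where "e N = K * d (p N) + K\<^sup>2 * d (q N)" for N
    have Kp: "K > 0" using K1 by simp
    have fp: "filterlim p sequentially sequentially"
      by (rule filterlim_at_top_mono[OF filterlim_ident]) (use pq in auto)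
    have fq: "filterlim q sequentially sequentially"
      by (rule filterlim_at_top_mono[OF filterlim_ident]) (use pq in auto)
    have "(\<lambda>N. d (p N)) \<longlonglongrightarrow> 0" using filterlim_compose[OF d0 fp] .
    moreover have "(\<lambda>N. d (q N)) \<longlonglongrightarrow> 0" using filterlim_compose[OF d0 fq] .
    ultimately have e0: "e \<longlonglongrightarrow> 0" unfolding e_def
      using tendsto_add[OF tendsto_mult_right_zero tendsto_mult_right_zero] by force
    have b1: "a N \<le> e N + K\<^sup>2 * t N" for N
    proof -
      let ?p = "p N" and ?q = "q N"
      have 1: "D (x ?p) (x ?q) \<le> K * (d ?p + D (x (Suc ?p)) (x ?q))"
        using tri[of "x ?p" "x ?q" "x (Suc ?p)"] unfolding d_def .
      have 2: "D (x (Suc ?p)) (x ?q) \<le> K * (t N + d ?q)"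
        using tri[of "x (Suc ?p)" "x ?q" "x (Suc ?q)"] unfolding d_def t_def by (simp add: sym)
      have "K * (d ?p + D (x (Suc ?p)) (x ?q)) \<le> K * (d ?p + K * (t N + d ?q))"
        using 2 Kp by simp
      with 1 show ?thesis unfolding a_def e_def by (simp add: algebra_simps power2_eq_square)
    qed
    have b2: "\<phi> (t N) * t N \<le> a N" if "t N > 0" for N
      using A[of "p N" "q N"] pq[of N] that unfolding a_def t_def by simp
    obtain N0 where N0: "\<And>N. N \<ge> N0 \<Longrightarrow> e N < \<epsilon>/2"
      using order_tendstoD(2)[OF e0, of "\<epsilon>/2"] ep by (auto simp: eventually_sequentially)
    have K2p: "K\<^sup>2 > 0" using Kp by simp
    have tlow: "t N \<ge> \<epsilon> / (2*K\<^sup>2)" if "N \<ge> N0" for N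
    proof -
      have "K\<^sup>2 * t N \<ge> \<epsilon>/2" using b1[of N] N0[OF that] pq[of N] unfolding a_def by linarith
      then show ?thesis using K2p by (simp add: field_simps)
    qed
    have tpos: "t N > 0" if "N \<ge> N0" for N
    proof -
      have "\<epsilon> / (2*K\<^sup>2) > 0" using ep K2p by simp
      then show ?thesis using tlow[OF that] by linarith
    qed
    have phup: "\<phi> (t N) \<le> K\<^sup>2 + e N * (2*K\<^sup>2/\<epsilon>)" if "N \<ge> N0" for N
    proof -
      have "\<phi> (t N) * t N \<le> e N + K\<^sup>2 * t N" using b1[of N] b2[OF tpos[OF that]] by linarith
      then have "(\<phi> (t N) - K\<^sup>2) * t N \<le> e N" by (simp add: algebra_simps)
      then have 1: "\<phi> (t N) - K\<^sup>2 \<le> e N / t N" using tpos[OF that] by (simp add: pos_le_divide_eq)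
      have eN: "e N \<ge> 0" unfolding e_def using dnn Kp by simp
      have "e N / t N \<le> e N / (\<epsilon> / (2*K\<^sup>2))"
      proof (rule divide_left_mono)
        have q: "\<epsilon> / (2*K\<^sup>2) > 0" using ep K2p by simp
        show "\<epsilon> / (2*K\<^sup>2) \<le> t N" using tlow[OF that] .
        show "0 \<le> e N" by (rule eN)
        show "0 < t N * (\<epsilon> / (2*K\<^sup>2))" using q tpos[OF that] by (rule mult_pos_pos[rotated])
      qed
      also have "\<dots> = e N * (2*K\<^sup>2/\<epsilon>)" by simp
      finally show ?thesis using 1 by linarith
    qed
    define tt where "tt n = t (n + N0)" for n
    have ttp: "\<forall>n. tt n > 0" unfolding tt_def using tpos by simp
    have "(\<lambda>n. \<phi> (tt n)) \<longlonglongrightarrow> K\<^sup>2"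
    proof (rule tendsto_sandwich[where f="\<lambda>n. K\<^sup>2" and h="\<lambda>n. K\<^sup>2 + e (n + N0) * (2*K\<^sup>2/\<epsilon>)"])
      show "\<forall>\<^sub>F n in sequentially. K\<^sup>2 \<le> \<phi> (tt n)"
        using ttp phi_range by (intro always_eventually allI) (meson less_imp_le)
      show "\<forall>\<^sub>F n in sequentially. \<phi> (tt n) \<le> K\<^sup>2 + e (n + N0) * (2*K\<^sup>2/\<epsilon>)"
        unfolding tt_def using phup by (intro always_eventually allI) simp
      show "((\<lambda>n. K\<^sup>2) \<longlongrightarrow> K\<^sup>2) sequentially" by simp
      have "(\<lambda>n. e (n + N0)) \<longlonglongrightarrow> 0" using LIMSEQ_ignore_initial_segment[OF e0] .
      then have "(\<lambda>n. e (n + N0) * (2*K\<^sup>2/\<epsilon>)) \<longlonglongrightarrow> 0" by (rule tendsto_mult_left_zero)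
      from tendsto_add[OF tendsto_const this, of "K\<^sup>2"]
      show "(\<lambda>n. K\<^sup>2 + e (n + N0) * (2*K\<^sup>2/\<epsilon>)) \<longlonglongrightarrow> K\<^sup>2" by simp
    qed
    then have tt0: "tt \<longlonglongrightarrow> 0" using phi_cond[OF ttp] by blast
    have "\<forall>n. \<epsilon> / (2*K\<^sup>2) \<le> tt n" unfolding tt_def using tlow by simp
    then have "\<epsilon> / (2*K\<^sup>2) \<le> 0" by (intro LIMSEQ_le_const[OF tt0]) blast
    moreover have "\<epsilon> / (2*K\<^sup>2) > 0" using ep K2p by simp
    ultimately show False by linarith
  qed
  have cauchy: "bml_double_limit D x 0"
    unfolding bml_double_limit_def
  proof (intro allI impI)
    fix \<epsilon> :: real assume ep: "\<epsilon> > 0"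
    define \<delta> where "\<delta> = \<epsilon> / (2*K)"
    have dp: "\<delta> > 0" using ep K1 by (simp add: \<delta>_def)
    have dle: "\<delta> \<le> \<epsilon>" using ep K1 unfolding \<delta>_def by (simp add: field_simps)
    have Keps: "K * (\<delta> + \<delta>) = \<epsilon>" using K1 unfolding \<delta>_def by (simp add: field_simps)
    obtain N1 where N1: "\<And>n m. N1 \<le> n \<Longrightarrow> N1 \<le> m \<Longrightarrow> odd (n+m) \<Longrightarrow> D (x n) (x m) < \<delta>"
      using C[rule_format, OF dp] by blast
    obtain N2 where N2: "\<And>n. n \<ge> N2 \<Longrightarrow> d n < \<delta>"
      using order_tendstoD(2)[OF d0 dp] by (auto simp: eventually_sequentially)
    show "\<exists>N. \<forall>n m. N \<le> n \<and> N \<le> m \<longrightarrow> \<bar>D (x n) (x m) - 0\<bar> < \<epsilon>"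
    proof (intro exI[of _ "max N1 N2"] allI impI)
      fix n m assume nm: "max N1 N2 \<le> n \<and> max N1 N2 \<le> m"
      have "D (x n) (x m) < \<epsilon>"
      proof (cases "odd (n+m)")
        case True then show ?thesis using N1[of n m] nm dle by simp
      next
        case False
        then have o: "odd (n + Suc m)" by simp
        have tr: "D (x n) (x m) \<le> K * (D (x n) (x (Suc m)) + D (x (Suc m)) (x m))" by (rule tri)
        have a: "D (x n) (x (Suc m)) < \<delta>" using N1[of n "Suc m"] nm o by simp
        have "D (x (Suc m)) (x m) = d m" unfolding d_def by (rule sym)
        then have b: "D (x (Suc m)) (x m) < \<delta>" using N2[of m] nm by simp
        have "K * (D (x n) (x (Suc m)) + D (x (Suc m)) (x m)) < K * (\<delta> + \<delta>)"
          using a b K1 by (intro mult_strict_left_mono) auto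
        then show ?thesis using Keps tr by linarith
      qed
      then show "\<bar>D (x n) (x m) - 0\<bar> < \<epsilon>" using nn by simp
    qed
  qed
  then have "bml_cauchy D x" unfolding bml_cauchy_def by (rule exI)
  then obtain z where dl: "bml_double_limit D x (D z z)" and cv0: "bml_converges D x z"
    using complete[unfolded bml_complete_def, rule_format] by blast
  have cv: "(\<lambda>n. D (x n) z) \<longlonglongrightarrow> D z z" using cv0 unfolding bml_converges_def .
  have Dzz: "D z z = 0"
  proof (rule ccontr)
    assume ne: "D z z \<noteq> 0"
    then have "\<bar>D z z\<bar>/2 > 0" by simp
    then obtain N1 N2 where "\<forall>n m. N1 \<le> n \<and> N1 \<le> m \<longrightarrow> \<bar>D (x n) (x m) - D z z\<bar> < \<bar>D z z\<bar>/2"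
      and "\<forall>n m. N2 \<le> n \<and> N2 \<le> m \<longrightarrow> \<bar>D (x n) (x m) - 0\<bar> < \<bar>D z z\<bar>/2"
      using dl cauchy unfolding bml_double_limit_def by meson
    then have "\<bar>D (x (N1+N2)) (x (N1+N2)) - D z z\<bar> < \<bar>D z z\<bar>/2"
      "\<bar>D (x (N1+N2)) (x (N1+N2)) - 0\<bar> < \<bar>D z z\<bar>/2" by auto
    then show False by linarith
  qed
  have ev: "\<exists>N. \<forall>n\<ge>N. D (x n) z < \<epsilon>" if "\<epsilon> > 0" for \<epsilon>
    using order_tendstoD(2)[OF cv, of \<epsilon>] that Dzz by (auto simp: eventually_sequentially)
  obtain u where u: "z = T u" using onto_T by (metis surjD)
  obtain v where v: "z = S v" using onto_S by (metis surjD)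
  have "D u z = 0"
  proof (rule ccontr)
    assume "D u z \<noteq> 0"
    then have pos: "D u z > 0" using nn[of u z] by simp
    define \<epsilon> where "\<epsilon> = D u z / (2*K)"
    have "\<epsilon> > 0" using pos K1 by (simp add: \<epsilon>_def)
    then obtain N where N: "\<And>n. n \<ge> N \<Longrightarrow> D (x n) z < \<epsilon>" using ev by blast
    define n where "n = 2*N+1"
    have on: "odd n" unfolding n_def by simp
    have 1: "D u (x (Suc n)) < \<epsilon>"
      using G'[of u "x (Suc n)"] xSS[OF on] u N[of n] by (simp add: n_def sym)
    have 2: "D (x (Suc n)) z < \<epsilon>" using N[of "Suc n"] by (simp add: n_def)
    have "D u z \<le> K * (D u (x (Suc n)) + D (x (Suc n)) z)" by (rule tri)
    also have "\<dots> < K * (\<epsilon> + \<epsilon>)" using 1 2 K1 by (intro mult_strict_left_mono) auto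
    also have "\<dots> = D u z" using K1 by (simp add: \<epsilon>_def field_simps)
    finally show False by simp
  qed
  then have Tz: "T z = z" using z0 u by metis
  have "D v z = 0"
  proof (rule ccontr)
    assume "D v z \<noteq> 0"
    then have pos: "D v z > 0" using nn[of v z] by simp
    define \<epsilon> where "\<epsilon> = D v z / (2*K)"
    have "\<epsilon> > 0" using pos K1 by (simp add: \<epsilon>_def)
    then obtain N where N: "\<And>n. n \<ge> N \<Longrightarrow> D (x n) z < \<epsilon>" using ev by blast
    define n where "n = 2*N"
    have en: "even n" unfolding n_def by simp
    have 1: "D v (x (Suc n)) < \<epsilon>"
      using G'[of "x (Suc n)" v] xT[OF en] v N[of n] by (simp add: n_def sym)
    have 2: "D (x (Suc n)) z < \<epsilon>" using N[of "Suc n"] by (simp add: n_def)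
    have "D v z \<le> K * (D v (x (Suc n)) + D (x (Suc n)) z)" by (rule tri)
    also have "\<dots> < K * (\<epsilon> + \<epsilon>)" using 1 2 K1 by (intro mult_strict_left_mono) auto
    also have "\<dots> = D v z" using K1 by (simp add: \<epsilon>_def field_simps)
    finally show False by simp
  qed
  then have Sz: "S z = z" using z0 v by metis
  show ?thesis using Tz Sz uniq by blast
qed

end
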